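(* For every $\nu>0$, $$\lim_{\tau\to\infty}\frac{\operatorname{tr}\big(e^{-H_{\tau,0}-\nu\mathcal N_\tau}\big)}{\operatorname{tr}\big(e^{-H_{\tau,0}}\big)}=\int e^{-\nu\mathcal N}\,d\mu.$$
   Context: $\mathfrak h=L^2(\Lambda;\mathbb C)$ with $\Lambda=\mathbb T^1$ or $\mathbb R$. $h=-\Delta+\kappa+v$ ($\kappa>0$, $v\ge0$) is a positive self-adjoint operator on $\mathfrak h$ with compact resolvent and $\operatorname{tr}h^{-1}<\infty$, with spectral decomposition $h=\sum_{k\in\mathbb N}\lambda_ku_ku_k^*$ ($\lambda_k>0$, $u_k$ orthonormal). $\mathcal F=\bigoplus_{n\ge0}\mathfrak h^{(n)}$ is the bosonic Fock space ($\mathfrak h^{(n)}$ = symmetric tensors). For $\tau>0$, $H_{\tau,0}$ is the operator on $\mathcal F$ acting on $\mathfrak h^{(n)}$ as $\frac1\tau\sum_{i=1}^nh_i$ ($h_i$ = $h$ acting in the $i$-th variable), i.e. $H_{\tau,0}=\tau^{-1}\int\int b^*(x)h(x;y)b(y)$, and $\mathcal N_\tau$ acts on $\mathfrak h^{(n)}$ as multiplication by $n/\tau$. $\mu=\bigotimes_k\mu_k$ on $\mathbb C^{\mathbb N}$ with $\mu_k(dz)=\pi^{-1}e^{-|z|^2}dz$, $\phi=\sum_k\omega_k\lambda_k^{-1/2}u_k$, and $\mathcal N=\int|\phi(x)|^2dx=\sum_k|\omega_k|^2/\lambda_k$. *)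

theory Defs
  imports "HOL-Probability.Probability"
begin

text \<open>Spectral data of the one-body operator h: eigenvalues lam k > 0 (with multiplicity),
  orthonormal eigenbasis u_k.  The bosonic Fock space over h has the orthonormal basis of
  symmetrised occupation-number states, indexed by finitely supported occupation functions
  n :: nat \<Rightarrow> nat (n k = number of particles in mode u_k).\<close>

definition occupations :: "(nat \<Rightarrow> nat) set" where
  "occupations = {n. finite {k. n k \<noteq> 0}}"

text \<open>Eigenvalue of H_{tau,0} = tau^{-1} dGamma(h) on the occupation state n.\<close>
definition H_free_eig :: "(nat \<Rightarrow> real) \<Rightarrow> real \<Rightarrow> (nat \<Rightarrow> nat) \<Rightarrow> real" where
  "H_free_eig lam \<tau> n = (\<Sum>k\<in>{k. n k \<noteq> 0}. real (n k) * lam k) / \<tau>"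

text \<open>Eigenvalue of the rescaled number operator N_tau on the occupation state n.\<close>
definition N_tau_eig :: "real \<Rightarrow> (nat \<Rightarrow> nat) \<Rightarrow> real" where
  "N_tau_eig \<tau> n = (\<Sum>k\<in>{k. n k \<noteq> 0}. real (n k)) / \<tau>"

text \<open>tr(exp(-H_{tau,0} - nu N_tau)) computed in the occupation-number eigenbasis
  (both operators are diagonal in it); nu = 0 gives tr(exp(-H_{tau,0})).\<close>
definition fock_gibbs_trace :: "(nat \<Rightarrow> real) \<Rightarrow> real \<Rightarrow> real \<Rightarrow> real" where
  "fock_gibbs_trace lam \<nu> \<tau> =
     (\<Sum>\<^sub>\<infinity>n\<in>occupations. exp (- H_free_eig lam \<tau> n - \<nu> * N_tau_eig \<tau> n))"

definition gauss_C :: "complex measure" where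
  "gauss_C = density lborel (\<lambda>z. ennreal (exp (- (cmod z)\<^sup>2) / pi))"

definition gauss_mu :: "(nat \<Rightarrow> complex) measure" where
  "gauss_mu = PiM UNIV (\<lambda>_. gauss_C)"

text \<open>Classical mass N(omega) = int |phi|^2 = sum_k |omega_k|^2 / lam_k.\<close>
definition classical_mass :: "(nat \<Rightarrow> real) \<Rightarrow> (nat \<Rightarrow> complex) \<Rightarrow> real" where
  "classical_mass lam \<omega> = (\<Sum>k. (cmod (\<omega> k))\<^sup>2 / lam k)"

end

theory Submission
  imports Defs
begin

lemma gauss1:
  fixes s :: real assumes s: "s > 0"
  shows "(\<integral>\<^sup>+x. ennreal (exp (- s * x\<^sup>2)) \<partial>lborel) = ennreal (sqrt (pi / s))"
proof -
  define sg where "sg = sqrt (1 / (2 * s))"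
  have sg2: "sg\<^sup>2 = 1 / (2 * s)" using s by (simp add: sg_def)
  have eq: "exp (- s * x\<^sup>2) = sqrt (pi / s) * normal_density 0 sg x" for x
  proof -
    have "2 * pi * sg\<^sup>2 = pi / s" using s by (simp add: sg2)
    moreover have "-(x - 0)\<^sup>2/ (2 * sg\<^sup>2) = - s * x\<^sup>2" using s by (simp add: sg2)
    ultimately show ?thesis using s by (simp add: normal_density_def real_sqrt_divide)
  qed
  have "(\<integral>\<^sup>+x. ennreal (exp (- s * x\<^sup>2)) \<partial>lborel) = (\<integral>\<^sup>+x. ennreal (sqrt (pi / s)) * ennreal (normal_density 0 sg x) \<partial>lborel)"
    by (rule nn_integral_cong) (simp only: eq ennreal_mult[symmetric] real_sqrt_ge_zero s normal_density_nonneg pi_ge_zero divide_nonneg_nonneg less_imp_le)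
  also have "\<dots> = ennreal (sqrt (pi / s)) * (\<integral>\<^sup>+x. ennreal (normal_density 0 sg x) \<partial>lborel)"
    by (simp add: nn_integral_cmult)
  also have "(\<integral>\<^sup>+x. ennreal (normal_density 0 sg x) \<partial>lborel) = 1"
    using s integrable_normal_density[of sg 0] integral_normal_density[of sg 0]
    by (subst nn_integral_eq_integral) (auto simp: sg_def)
  finally show ?thesis by simp
qed

lemma gauss2:
  fixes s :: real assumes s: "s > 0"
  shows "(\<integral>\<^sup>+z. ennreal (exp (- s * (cmod z)\<^sup>2)) \<partial>(lborel::complex measure)) = ennreal (pi / s)"
proof -
  have "(\<integral>\<^sup>+z. ennreal (exp (- s * (cmod z)\<^sup>2)) \<partial>(lborel::complex measure))
     = (\<integral>\<^sup>+z. (\<Prod>b\<in>Basis. ennreal (exp (- s * (z \<bullet> b)\<^sup>2))) \<partial>(lborel::complex measure))"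
  proof (rule nn_integral_cong)
    fix z :: complex
    have "(\<Prod>b\<in>Basis. ennreal (exp (- s * (z \<bullet> b)\<^sup>2))) = ennreal (exp (- s * (Re z)\<^sup>2)) * ennreal (exp (- s * (Im z)\<^sup>2))"
      by (simp add: Basis_complex_def inner_complex_def)
    also have "\<dots> = ennreal (exp (- s * (cmod z)\<^sup>2))"
      by (simp add: ennreal_mult[symmetric] exp_add[symmetric] cmod_power2 algebra_simps)
    finally show "ennreal (exp (- s * (cmod z)\<^sup>2)) = (\<Prod>b\<in>Basis. ennreal (exp (- s * (z \<bullet> b)\<^sup>2)))" by simp
  qed
  also have "\<dots> = (\<Prod>b\<in>(Basis::complex set). (\<integral>\<^sup>+x. ennreal (exp (- s * x\<^sup>2)) \<partial>lborel))"
    by (rule nn_integral_lborel_prod) auto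
  also have "\<dots> = ennreal (sqrt (pi / s)) * ennreal (sqrt (pi / s))"
    using gauss1[OF s] by (simp add: Basis_complex_def)
  also have "\<dots> = ennreal (pi / s)"
    using s by (simp add: ennreal_mult[symmetric])
  finally show ?thesis .
qed

lemma gaussC_laplace:
  fixes t :: real assumes t: "t > -1"
  shows "(\<integral>\<^sup>+z. ennreal (exp (- t * (cmod z)\<^sup>2)) \<partial>gauss_C) = ennreal (1 / (1 + t))"
proof -
  have "(\<integral>\<^sup>+z. ennreal (exp (- t * (cmod z)\<^sup>2)) \<partial>gauss_C)
     = (\<integral>\<^sup>+z. ennreal (exp (- (cmod z)\<^sup>2) / pi) * ennreal (exp (- t * (cmod z)\<^sup>2)) \<partial>lborel)"
    unfolding gauss_C_def by (subst nn_integral_density) auto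
  also have "\<dots> = (\<integral>\<^sup>+z. ennreal (1/pi) * ennreal (exp (- (1 + t) * (cmod z)\<^sup>2)) \<partial>lborel)"
    by (rule nn_integral_cong) (simp add: ennreal_mult[symmetric] exp_add[symmetric] algebra_simps)
  also have "\<dots> = ennreal (1/pi) * ennreal (pi / (1 + t))"
    using t gauss2[of "1+t"] by (subst nn_integral_cmult) auto
  also have "\<dots> = ennreal (1 / (1 + t))"
    using t by (subst ennreal_mult[symmetric]) auto
  finally show ?thesis .
qed

lemma prob_gaussC: "prob_space gauss_C"
proof
  have "emeasure gauss_C (space gauss_C) = (\<integral>\<^sup>+z. ennreal (exp (- 0 * (cmod z)\<^sup>2)) \<partial>gauss_C)"
    by simp
  then show "emeasure gauss_C (space gauss_C) = 1" using gaussC_laplace[of 0] by simp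
qed

lemma pps: "product_prob_space (\<lambda>_::nat. gauss_C)"
  unfolding product_prob_space_def product_prob_space_axioms_def product_sigma_finite_def
  using prob_gaussC prob_space_imp_sigma_finite by auto

interpretation GM: product_prob_space "\<lambda>_. gauss_C" "UNIV :: nat set" by (rule pps)

lemma prob_mu: "prob_space gauss_mu"
  unfolding gauss_mu_def by (rule GM.P.prob_space_axioms)

lemma sets_gaussC[simp, measurable_cong]: "sets gauss_C = sets borel"
  by (simp add: gauss_C_def)

lemma gauss_mu_prod:
  fixes h :: "nat \<Rightarrow> complex \<Rightarrow> real"
  assumes J: "finite J" and int: "\<And>k. k \<in> J \<Longrightarrow> integrable gauss_C (h k)"
  shows "(\<integral>\<omega>. (\<Prod>k\<in>J. h k (\<omega> k)) \<partial>gauss_mu) = (\<Prod>k\<in>J. integral\<^sup>L gauss_C (h k))"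
proof -
  have meas[measurable]: "h k \<in> borel_measurable gauss_C" if "k \<in> J" for k
    using int[OF that] by auto
  have m2: "(\<lambda>x. \<Prod>k\<in>J. h k (x k)) \<in> borel_measurable (PiM J (\<lambda>_. gauss_C))"
    by (rule borel_measurable_prod) (use meas in auto)
  have "(\<Prod>k\<in>J. integral\<^sup>L gauss_C (h k)) = (\<integral>x. (\<Prod>k\<in>J. h k (x k)) \<partial>PiM J (\<lambda>_. gauss_C))"
    by (rule GM.product_integral_prod[symmetric]) (use J int in auto)
  also have "PiM J (\<lambda>_. gauss_C) = distr gauss_mu (PiM J (\<lambda>_. gauss_C)) (\<lambda>x. restrict x J)"
    unfolding gauss_mu_def by (rule GM.distr_PiM_restrict_finite[symmetric]) (use J in auto)
  also have "(\<integral>x. (\<Prod>k\<in>J. h k (x k)) \<partial>distr gauss_mu (PiM J (\<lambda>_. gauss_C)) (\<lambda>x. restrict x J))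
      = (\<integral>\<omega>. (\<Prod>k\<in>J. h k (restrict \<omega> J k)) \<partial>gauss_mu)"
    by (rule integral_distr) (auto simp: gauss_mu_def m2)
  also have "\<dots> = (\<integral>\<omega>. (\<Prod>k\<in>J. h k (\<omega> k)) \<partial>gauss_mu)"
    by (rule Bochner_Integration.integral_cong) auto
  finally show ?thesis ..
qed

lemma nn_component:
  fixes f :: "complex \<Rightarrow> ennreal"
  assumes [measurable]: "f \<in> borel_measurable borel"
  shows "(\<integral>\<^sup>+\<omega>. f (\<omega> k) \<partial>gauss_mu) = (\<integral>\<^sup>+z. f z \<partial>gauss_C)"
proof -
  have "(\<integral>\<^sup>+z. f z \<partial>gauss_C) = (\<integral>\<^sup>+z. f z \<partial>distr gauss_mu gauss_C (\<lambda>\<omega>. \<omega> k))"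
    unfolding gauss_mu_def by (subst GM.PiM_component) auto
  also have "\<dots> = (\<integral>\<^sup>+\<omega>. f (\<omega> k) \<partial>gauss_mu)"
    by (subst nn_integral_distr) (auto simp: gauss_mu_def)
  finally show ?thesis ..
qed

lemma second_moment: "(\<integral>\<^sup>+z. ennreal ((cmod z)\<^sup>2) \<partial>gauss_C) \<le> 4"
proof -
  have "(\<integral>\<^sup>+z. ennreal ((cmod z)\<^sup>2) \<partial>gauss_C) \<le> (\<integral>\<^sup>+z. ennreal 2 * ennreal (exp (- (-1/2) * (cmod z)\<^sup>2)) \<partial>gauss_C)"
  proof (rule nn_integral_mono)
    fix z :: complex
    have "(cmod z)\<^sup>2 / 2 \<le> exp ((cmod z)\<^sup>2 / 2)"
      using exp_ge_add_one_self[of "(cmod z)\<^sup>2 / 2"] by linarith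
    then show "ennreal ((cmod z)\<^sup>2) \<le> ennreal 2 * ennreal (exp (- (-1/2) * (cmod z)\<^sup>2))"
      by (subst ennreal_mult[symmetric]) (auto intro!: ennreal_leI)
  qed
  also have "\<dots> = ennreal 2 * ennreal (1 / (1 + (-1/2)))"
    using gaussC_laplace[of "-1/2"] by (subst nn_integral_cmult) auto
  also have "\<dots> = 4" by (simp flip: ennreal_mult)
  finally show ?thesis .
qed

lemma laplace_real:
  fixes t :: real assumes t: "t \<ge> 0"
  shows "integrable gauss_C (\<lambda>z. exp (- t * (cmod z)\<^sup>2))"
    and "(\<integral>z. exp (- t * (cmod z)\<^sup>2) \<partial>gauss_C) = 1 / (1 + t)"
proof -
  have FM: "finite_measure gauss_C" using prob_gaussC by (simp add: prob_space_def)
  show "integrable gauss_C (\<lambda>z. exp (- t * (cmod z)\<^sup>2))"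
    by (rule finite_measure.integrable_const_bound[OF FM, where B=1]) (use t in \<open>auto intro!: mult_nonneg_nonneg\<close>)
  show "(\<integral>z. exp (- t * (cmod z)\<^sup>2) \<partial>gauss_C) = 1 / (1 + t)"
    using t gaussC_laplace[of t] by (subst integral_eq_nn_integral) auto
qed

lemma suminf_not_summable: "\<not> summable f \<Longrightarrow> suminf f = (THE s. False)"
  unfolding suminf_def summable_def by (metis)

lemma cm_meas:
  assumes lam_pos: "\<And>k. lam k > 0"
  shows "(\<lambda>\<omega>. classical_mass lam \<omega>) \<in> borel_measurable gauss_mu"
proof -
  define S where "S \<omega> = (\<Sum>k. ennreal ((cmod (\<omega> k))\<^sup>2 / lam k))" for \<omega> :: "nat \<Rightarrow> complex"
  have nn: "\<And>\<omega> k. 0 \<le> (cmod (\<omega> k))\<^sup>2 / lam k" using lam_pos by (simp add: less_imp_le)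
  have eq: "classical_mass lam \<omega> = (if S \<omega> = top then (THE s. False) else enn2real (S \<omega>))" for \<omega>
  proof (cases "summable (\<lambda>k. (cmod (\<omega> k))\<^sup>2 / lam k)")
    case True
    then have "S \<omega> = ennreal (classical_mass lam \<omega>)"
      unfolding S_def classical_mass_def using nn by (intro suminf_ennreal2) auto
    moreover have "classical_mass lam \<omega> \<ge> 0"
      unfolding classical_mass_def using nn True by (intro suminf_nonneg) auto
    ultimately show ?thesis by simp
  next
    case False
    then have "S \<omega> = top" unfolding S_def using summable_suminf_not_top[of "\<lambda>k. (cmod (\<omega> k))\<^sup>2 / lam k", OF nn[of \<omega>]] by blast
    then show ?thesis using False by (simp add: classical_mass_def suminf_not_summable)
  qed
  have [measurable]: "S \<in> borel_measurable gauss_mu"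
    unfolding S_def gauss_mu_def by measurable
  show ?thesis unfolding eq by measurable
qed

lemma cm_AE:
  assumes lam_pos: "\<And>k. lam k > 0" and tc: "summable (\<lambda>k. 1 / lam k)"
  shows "AE \<omega> in gauss_mu. summable (\<lambda>k. (cmod (\<omega> k))\<^sup>2 / lam k)"
proof -
  have nn: "\<And>\<omega> k. 0 \<le> (cmod (\<omega> k))\<^sup>2 / lam k" using lam_pos by (simp add: less_imp_le)
  have tc4: "summable (\<lambda>k. 4 / lam k)" using summable_mult[OF tc, of 4] by simp
  have "(\<integral>\<^sup>+\<omega>. (\<Sum>k. ennreal ((cmod (\<omega> k))\<^sup>2 / lam k)) \<partial>gauss_mu)
      = (\<Sum>k. \<integral>\<^sup>+\<omega>. ennreal ((cmod (\<omega> k))\<^sup>2 / lam k) \<partial>gauss_mu)"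
    apply (rule nn_integral_suminf[where f="\<lambda>k \<omega>. ennreal ((cmod (\<omega> k))\<^sup>2 / lam k)"])
    unfolding gauss_mu_def by measurable
  also have "\<dots> \<le> (\<Sum>k. ennreal (4 / lam k))"
  proof (rule suminf_le)
    fix k
    have "(\<integral>\<^sup>+\<omega>. ennreal ((cmod (\<omega> k))\<^sup>2 / lam k) \<partial>gauss_mu)
        = (\<integral>\<^sup>+z. ennreal (1 / lam k) * ennreal ((cmod z)\<^sup>2) \<partial>gauss_C)"
      by (subst nn_component[where f="\<lambda>z. ennreal ((cmod z)\<^sup>2 / lam k)"])
         (use lam_pos[of k] in \<open>auto simp: ennreal_mult[symmetric] intro!: nn_integral_cong\<close>)
    also have "\<dots> = ennreal (1 / lam k) * (\<integral>\<^sup>+z. ennreal ((cmod z)\<^sup>2) \<partial>gauss_C)"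
      by (rule nn_integral_cmult) auto
    also have "\<dots> \<le> ennreal (1 / lam k) * 4"
      by (intro mult_left_mono second_moment) auto
    also have "\<dots> = ennreal (4 / lam k)"
      using lam_pos[of k] ennreal_mult[of "1/lam k" 4] by simp
    finally show "(\<integral>\<^sup>+\<omega>. ennreal ((cmod (\<omega> k))\<^sup>2 / lam k) \<partial>gauss_mu) \<le> ennreal (4 / lam k)" .
  qed auto
  also have "\<dots> = ennreal (\<Sum>k. 4 / lam k)"
    using tc4 lam_pos by (intro suminf_ennreal2) (auto simp: less_imp_le)
  finally have le: "(\<integral>\<^sup>+\<omega>. (\<Sum>k. ennreal ((cmod (\<omega> k))\<^sup>2 / lam k)) \<partial>gauss_mu) \<le> ennreal (\<Sum>k. 4 / lam k)" .
  have "(\<integral>\<^sup>+\<omega>. (\<Sum>k. ennreal ((cmod (\<omega> k))\<^sup>2 / lam k)) \<partial>gauss_mu) \<noteq> top"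
    by (rule neq_top_trans[OF ennreal_neq_top le])
  then have "AE \<omega> in gauss_mu. (\<Sum>k. ennreal ((cmod (\<omega> k))\<^sup>2 / lam k)) \<noteq> top"
  proof -
    have m: "(\<lambda>\<omega>. (\<Sum>k. ennreal ((cmod (\<omega> k))\<^sup>2 / lam k))) \<in> borel_measurable gauss_mu"
      unfolding gauss_mu_def by measurable
    show ?thesis using nn_integral_PInf_AE[OF m] \<open>_ \<noteq> top\<close> by (simp add: infinity_ennreal_def)
  qed
  then show ?thesis
  proof (rule eventually_mono)
    fix \<omega> :: "nat \<Rightarrow> complex"
    assume "(\<Sum>k. ennreal ((cmod (\<omega> k))\<^sup>2 / lam k)) \<noteq> top"
    then show "summable (\<lambda>k. (cmod (\<omega> k))\<^sup>2 / lam k)"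
      by (rule summable_suminf_not_top[OF nn])
  qed
qed

lemma lap_aux: "0 \<le> a \<Longrightarrow> 0 < l \<Longrightarrow> integrable gauss_C (\<lambda>z. exp (- (a * (cmod z)\<^sup>2 / l)))"
  using laplace_real(1)[of "a / l"] by simp

lemma rhs_limit:
  assumes lam_pos: "\<And>k. lam k > 0" and tc: "summable (\<lambda>k. 1 / lam k)" and nu: "\<nu> \<ge> 0"
  shows "(\<lambda>m. \<Prod>k<m. lam k / (lam k + \<nu>)) \<longlonglongrightarrow> (\<integral>\<omega>. exp (- \<nu> * classical_mass lam \<omega>) \<partial>gauss_mu)"
proof -
  have int_eq: "(\<integral>\<omega>. exp (- \<nu> * (\<Sum>k<m. (cmod (\<omega> k))\<^sup>2 / lam k)) \<partial>gauss_mu) = (\<Prod>k<m. lam k / (lam k + \<nu>))" for m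
  proof -
    have "(\<integral>\<omega>. exp (- \<nu> * (\<Sum>k<m. (cmod (\<omega> k))\<^sup>2 / lam k)) \<partial>gauss_mu)
       = (\<integral>\<omega>. (\<Prod>k<m. exp (- (\<nu> / lam k) * (cmod (\<omega> k))\<^sup>2)) \<partial>gauss_mu)"
    proof (rule Bochner_Integration.integral_cong[OF refl])
      fix \<omega> :: "nat \<Rightarrow> complex"
      have "- \<nu> * (\<Sum>k<m. (cmod (\<omega> k))\<^sup>2 / lam k) = (\<Sum>k<m. - (\<nu> / lam k) * (cmod (\<omega> k))\<^sup>2)"
        by (simp add: sum_distrib_left sum_negf)
      then show "exp (- \<nu> * (\<Sum>k<m. (cmod (\<omega> k))\<^sup>2 / lam k)) = (\<Prod>k<m. exp (- (\<nu> / lam k) * (cmod (\<omega> k))\<^sup>2))"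
        by (simp add: exp_sum)
    qed
    also have "\<dots> = (\<Prod>k<m. \<integral>z. exp (- (\<nu> / lam k) * (cmod z)\<^sup>2) \<partial>gauss_C)"
      by (rule gauss_mu_prod[where h="\<lambda>k z. exp (- (\<nu> / lam k) * (cmod z)\<^sup>2)"])
         (auto intro!: lap_aux simp: lam_pos nu)
    also have "\<dots> = (\<Prod>k<m. 1 / (1 + \<nu> / lam k))"
    proof (rule prod.cong[OF refl])
      fix k have "0 \<le> \<nu> / lam k" using lam_pos[of k] nu by simp
      then show "(\<integral>z. exp (- (\<nu> / lam k) * (cmod z)\<^sup>2) \<partial>gauss_C) = 1 / (1 + \<nu> / lam k)"
        by (rule laplace_real(2))
    qed
    also have "\<dots> = (\<Prod>k<m. lam k / (lam k + \<nu>))"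
    proof (rule prod.cong[OF refl])
      fix k have "lam k > 0" by (rule lam_pos)
      then show "1 / (1 + \<nu> / lam k) = lam k / (lam k + \<nu>)" using nu by (simp add: field_simps)
    qed
    finally show ?thesis .
  qed
  interpret MU: prob_space gauss_mu by (rule prob_mu)
  have cmm[measurable]: "classical_mass lam \<in> borel_measurable gauss_mu" using cm_meas[OF lam_pos] by simp
  have "(\<lambda>m. \<integral>\<omega>. exp (- \<nu> * (\<Sum>k<m. (cmod (\<omega> k))\<^sup>2 / lam k)) \<partial>gauss_mu)
        \<longlonglongrightarrow> (\<integral>\<omega>. exp (- \<nu> * classical_mass lam \<omega>) \<partial>gauss_mu)"
  proof (rule integral_dominated_convergence[where w="\<lambda>_. 1"])
    show "(\<lambda>\<omega>. exp (- \<nu> * classical_mass lam \<omega>)) \<in> borel_measurable gauss_mu" by measurable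
    show "(\<lambda>\<omega>. exp (- \<nu> * (\<Sum>k<m. (cmod (\<omega> k))\<^sup>2 / lam k))) \<in> borel_measurable gauss_mu" for m
      unfolding gauss_mu_def by measurable
    show "integrable gauss_mu (\<lambda>_. 1::real)" by simp
    show "AE \<omega> in gauss_mu. (\<lambda>m. exp (- \<nu> * (\<Sum>k<m. (cmod (\<omega> k))\<^sup>2 / lam k))) \<longlonglongrightarrow> exp (- \<nu> * classical_mass lam \<omega>)"
      using cm_AE[OF lam_pos tc]
    proof (rule eventually_mono)
      fix \<omega> :: "nat \<Rightarrow> complex"
      assume "summable (\<lambda>k. (cmod (\<omega> k))\<^sup>2 / lam k)"
      then have "(\<lambda>m. \<Sum>k<m. (cmod (\<omega> k))\<^sup>2 / lam k) \<longlonglongrightarrow> classical_mass lam \<omega>"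
        unfolding classical_mass_def by (rule summable_LIMSEQ)
      then show "(\<lambda>m. exp (- \<nu> * (\<Sum>k<m. (cmod (\<omega> k))\<^sup>2 / lam k))) \<longlonglongrightarrow> exp (- \<nu> * classical_mass lam \<omega>)"
        by (intro tendsto_intros)
    qed
    show "AE \<omega> in gauss_mu. norm (exp (- \<nu> * (\<Sum>k<m. (cmod (\<omega> k))\<^sup>2 / lam k))) \<le> 1" for m
    proof (rule AE_I2)
      fix \<omega> :: "nat \<Rightarrow> complex"
      have "0 \<le> (\<Sum>k<m. (cmod (\<omega> k))\<^sup>2 / lam k)"
        using lam_pos by (intro sum_nonneg) (simp add: less_imp_le)
      then have "- \<nu> * (\<Sum>k<m. (cmod (\<omega> k))\<^sup>2 / lam k) \<le> 0" using nu
        by (simp add: mult_nonneg_nonneg)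
      then show "norm (exp (- \<nu> * (\<Sum>k<m. (cmod (\<omega> k))\<^sup>2 / lam k))) \<le> 1" by simp
    qed
  qed
  then show ?thesis by (simp only: int_eq)
qed

definition Om :: "nat \<Rightarrow> (nat \<Rightarrow> nat) set" where
  "Om m = {n. \<forall>k\<ge>m. n k = 0}"

lemma Om_occ: "Om m \<subseteq> occupations"
proof
  fix n assume "n \<in> Om m"
  then have "{k. n k \<noteq> 0} \<subseteq> {..<m}" by (auto simp: Om_def not_less[symmetric])
  then show "n \<in> occupations" unfolding occupations_def by (auto intro: finite_subset)
qed

lemma exponent_eq:
  assumes "n \<in> Om m"
  shows "H_free_eig lam \<tau> n + c * N_tau_eig \<tau> n = (\<Sum>k<m. real (n k) * ((lam k + c) / \<tau>))"
proof -
  have S: "{k. n k \<noteq> 0} \<subseteq> {..<m}" using assms by (auto simp: Om_def not_less[symmetric])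
  have "H_free_eig lam \<tau> n + c * N_tau_eig \<tau> n = (\<Sum>k\<in>{k. n k \<noteq> 0}. real (n k) * ((lam k + c) / \<tau>))"
    unfolding H_free_eig_def N_tau_eig_def
    by (simp add: sum_divide_distrib sum_distrib_left sum.distrib[symmetric] algebra_simps add_divide_distrib)
  also have "\<dots> = (\<Sum>k<m. real (n k) * ((lam k + c) / \<tau>))"
    by (rule sum.mono_neutral_left) (use S in auto)
  finally show ?thesis .
qed

lemma w_Om:
  assumes "n \<in> Om m"
  shows "exp (- H_free_eig lam \<tau> n - c * N_tau_eig \<tau> n) = (\<Prod>k<m. exp (- ((lam k + c) / \<tau>)) ^ n k)"
proof -
  have "exp (- H_free_eig lam \<tau> n - c * N_tau_eig \<tau> n) = exp (- (\<Sum>k<m. real (n k) * ((lam k + c) / \<tau>)))"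
    using exponent_eq[OF assms, of lam \<tau> c] by (simp add: algebra_simps)
  also have "\<dots> = (\<Prod>k<m. exp (- ((lam k + c) / \<tau>)) ^ n k)"
    by (simp add: exp_sum[symmetric] sum_negf[symmetric] exp_of_nat_mult[symmetric] ) 
  finally show ?thesis .
qed

lemma geom_has_sum:
  fixes q :: real assumes "0 \<le> q" "q < 1"
  shows "((\<lambda>j. q ^ j) has_sum (1 / (1 - q))) UNIV"
  by (rule sums_nonneg_imp_has_sum) (use assms in \<open>auto intro: geometric_sums\<close>)

lemma PiE_has_sum:
  fixes q :: "nat \<Rightarrow> real"
  assumes q: "\<And>k. 0 \<le> q k" "\<And>k. q k < 1"
  shows "((\<lambda>p. \<Prod>k<m. q k ^ p k) has_sum (\<Prod>k<m. 1 / (1 - q k))) (PiE {..<m} (\<lambda>_. UNIV))"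
proof -
  have hs: "((\<lambda>j. q k ^ j) has_sum (1 / (1 - q k))) UNIV" for k
    using geom_has_sum[OF q(1)[of k] q(2)[of k]] .
  have abs: "(\<lambda>j. norm (q k ^ j)) summable_on UNIV" for k
    using hs[of k] q(1)[of k] by (auto simp: has_sum_imp_summable)
  have eq: "infsum (\<lambda>p. \<Prod>k<m. q k ^ p k) (PiE {..<m} (\<lambda>_. UNIV)) = (\<Prod>k<m. infsum (\<lambda>j. q k ^ j) UNIV)"
    by (rule infsum_prod_PiE_abs) (use abs in auto)
  also have "\<dots> = (\<Prod>k<m. 1 / (1 - q k))"
    using hs by (intro prod.cong refl infsumI) auto
  finally have eq2: "infsum (\<lambda>p. \<Prod>k<m. q k ^ p k) (PiE {..<m} (\<lambda>_. UNIV)) = (\<Prod>k<m. 1 / (1 - q k))" .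
  have "(\<Prod>k<m. 1 / (1 - q k)) > 0" using q by (intro prod_pos) (auto simp: less_eq_real_def)
  then have "(\<lambda>p. \<Prod>k<m. q k ^ p k) summable_on (PiE {..<m} (\<lambda>_. UNIV))"
    using eq2 infsum_not_exists by fastforce
  then show ?thesis using eq2 by (metis has_sum_infsum)
qed

lemma Om_has_sum:
  fixes q :: "nat \<Rightarrow> real"
  assumes q: "\<And>k. 0 \<le> q k" "\<And>k. q k < 1"
  shows "((\<lambda>n. \<Prod>k<m. q k ^ n k) has_sum (\<Prod>k<m. 1 / (1 - q k))) (Om m)"
proof -
  have bij: "bij_betw (\<lambda>n. restrict n {..<m}) (Om m) (PiE {..<m} (\<lambda>_. UNIV))"
  proof (rule bij_betwI[where g="\<lambda>p k. if k < m then p k else 0"])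
    show "(\<lambda>n. restrict n {..<m}) \<in> Om m \<rightarrow> PiE {..<m} (\<lambda>_. UNIV)" by auto
    show "(\<lambda>p k. if k < m then p k else 0) \<in> PiE {..<m} (\<lambda>_. UNIV) \<rightarrow> Om m" by (auto simp: Om_def)
    show "(\<lambda>k. if k < m then restrict x {..<m} k else 0) = x" if "x \<in> Om m" for x
      using that by (auto simp: Om_def fun_eq_iff not_less)
    show "restrict (\<lambda>k. if k < m then y k else 0) {..<m} = y" if "y \<in> PiE {..<m} (\<lambda>_. UNIV)" for y
      using that by (auto simp: fun_eq_iff PiE_def extensional_def)
  qed
  have "((\<lambda>p. \<Prod>k<m. q k ^ p k) has_sum (\<Prod>k<m. 1 / (1 - q k))) (PiE {..<m} (\<lambda>_. UNIV))"
    by (rule PiE_has_sum) (use q in auto)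
  then have "((\<lambda>n. (\<lambda>p. \<Prod>k<m. q k ^ p k) (restrict n {..<m})) has_sum (\<Prod>k<m. 1 / (1 - q k))) (Om m)"
    using has_sum_reindex_bij_betw[OF bij, of "\<lambda>p. \<Prod>k<m. q k ^ p k"] by blast
  moreover have "(\<lambda>n. (\<lambda>p. \<Prod>k<m. q k ^ p k) (restrict n {..<m})) = (\<lambda>n. \<Prod>k<m. q k ^ n k)"
    by (auto intro!: prod.cong)
  ultimately show ?thesis by simp
qed

lemma factor_bound:
  fixes a :: real assumes a: "a > 0"
  shows "1 / (1 - exp (- a)) \<le> exp (1 / a)"
proof -
  have e: "1 + a \<le> exp a" by (rule exp_ge_add_one_self)
  have "exp (- a) \<le> 1 / (1 + a)"
    using e a by (simp add: exp_minus field_simps)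
  then have "1 - exp (- a) \<ge> a / (1 + a)" using a by (simp add: field_simps)
  moreover have "a / (1 + a) > 0" using a by simp
  ultimately have h1: "1 - exp (- a) \<ge> a / (1 + a)" and h2: "a / (1 + a) > 0" by auto
  have h3: "1 - exp (- a) > 0" using h1 h2 by linarith
  have "1 / (1 - exp (- a)) \<le> 1 / (a / (1 + a))"
    by (rule divide_left_mono) (use h1 h2 h3 in auto)
  also have "\<dots> = 1 + 1 / a" using a by (simp add: field_simps)
  also have "\<dots> \<le> exp (1 / a)" by (rule exp_ge_add_one_self)
  finally show ?thesis .
qed

lemma finite_in_Om:
  assumes "finite F" "F \<subseteq> occupations"
  shows "\<exists>m. F \<subseteq> Om m"
proof -
  have "finite (\<Union>n\<in>F. {k. n k \<noteq> 0})" using assms by (auto simp: occupations_def)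
  then obtain m where m: "\<And>k. k \<in> (\<Union>n\<in>F. {k. n k \<noteq> 0}) \<Longrightarrow> k < m"
    using finite_nat_bounded[of "\<Union>n\<in>F. {k. n k \<noteq> 0}"] by auto
  have "F \<subseteq> Om m"
  proof
    fix n assume "n \<in> F"
    then show "n \<in> Om m" using m by (force simp: Om_def)
  qed
  then show ?thesis ..
qed

lemma fock_limit:
  assumes lam_pos: "\<And>k. lam k > 0" and tc: "summable (\<lambda>k. 1 / lam k)"
    and c: "c \<ge> 0" and tau: "\<tau> > 0"
  shows "(\<lambda>m. \<Prod>k<m. 1 / (1 - exp (- ((lam k + c) / \<tau>)))) \<longlonglongrightarrow> fock_gibbs_trace lam c \<tau>"
proof -
  define q where "q k = exp (- ((lam k + c) / \<tau>))" for k
  define P where "P m = (\<Prod>k<m. 1 / (1 - q k))" for m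
  define w where "w n = exp (- H_free_eig lam \<tau> n - c * N_tau_eig \<tau> n)" for n
  have apos: "(lam k + c) / \<tau> > 0" for k using lam_pos[of k] c tau by simp
  have q0: "0 \<le> q k" and q1: "q k < 1" for k using apos[of k] by (auto simp: q_def)
  have w0: "0 \<le> w n" for n by (simp add: w_def)
  have hsOm: "(w has_sum P m) (Om m)" for m
  proof -
    have "((\<lambda>n. \<Prod>k<m. q k ^ n k) has_sum P m) (Om m)"
      unfolding P_def by (rule Om_has_sum) (use q0 q1 in auto)
    moreover have "w n = (\<Prod>k<m. q k ^ n k)" if "n \<in> Om m" for n
      unfolding w_def q_def by (rule w_Om[OF that])
    ultimately show ?thesis by (subst has_sum_cong) auto
  qed
  have fac1: "1 \<le> 1 / (1 - q k)" for k using q0[of k] q1[of k] by (simp add: field_simps)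
  have inc: "incseq P"
  proof (rule incseq_SucI)
    fix m
    have "P m \<ge> 0" unfolding P_def using q1 by (intro prod_nonneg) (auto simp: less_imp_le)
    then have "P m * 1 \<le> P m * (1 / (1 - q m))" by (intro mult_left_mono fac1)
    then show "P m \<le> P (Suc m)" by (simp add: P_def)
  qed
  define B where "B = exp (\<Sum>k. \<tau> / lam k)"
  have tcs: "summable (\<lambda>k. \<tau> / lam k)" using summable_mult[OF tc, of \<tau>] by simp
  have PB: "P m \<le> B" for m
  proof -
    have "P m \<le> (\<Prod>k<m. exp (\<tau> / lam k))"
      unfolding P_def
    proof (rule prod_mono)
      fix k
      have "1 / (1 - q k) \<le> exp (1 / ((lam k + c) / \<tau>))"
        unfolding q_def by (rule factor_bound[OF apos])
      also have "\<dots> \<le> exp (\<tau> / lam k)"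
        using lam_pos[of k] c tau by (simp add: frac_le)
      finally show "0 \<le> 1 / (1 - q k) \<and> 1 / (1 - q k) \<le> exp (\<tau> / lam k)"
        using fac1[of k] q1[of k] by simp
    qed
    also have "\<dots> = exp (\<Sum>k<m. \<tau> / lam k)" by (simp add: exp_sum)
    also have "\<dots> \<le> B"
    proof -
      have "(\<Sum>k<m. \<tau> / lam k) \<le> (\<Sum>k. \<tau> / lam k)"
        by (rule sum_le_suminf[OF tcs]) (use lam_pos tau in \<open>auto intro: less_imp_le\<close>)
      then show ?thesis unfolding B_def by simp
    qed
    finally show ?thesis .
  qed
  have bdd: "bdd_above (range P)" by (rule bdd_aboveI2[where M=B]) (rule PB)
  have lim: "P \<longlonglongrightarrow> (SUP m. P m)"
    by (rule LIMSEQ_incseq_SUP[OF bdd inc])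
  have PL: "P m \<le> (SUP m. P m)" for m
    by (rule cSUP_upper[OF _ bdd]) simp
  have fin: "sum w F \<le> (SUP m. P m)" if FF: "finite F" "F \<subseteq> occupations" for F
  proof -
    obtain m where "F \<subseteq> Om m" using finite_in_Om[OF FF] by blast
    then have "sum w F \<le> P m"
      by (intro finite_sum_le_has_sum[OF hsOm] FF) (auto simp: w0)
    then show ?thesis using PL[of m] by simp
  qed
  have summ: "w summable_on occupations"
  proof (rule nonneg_bdd_above_summable_on)
    show "bdd_above (sum w ` {F. F \<subseteq> occupations \<and> finite F})"
      by (rule bdd_aboveI2[where M="SUP m. P m"]) (use fin in auto)
  qed (rule w0)
  have Z1: "infsum w occupations \<le> (SUP m. P m)"
    by (rule infsum_le_finite_sums[OF summ fin])
  have Z2: "P m \<le> infsum w occupations" for m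
    by (rule has_sum_mono2[OF hsOm[of m] has_sum_infsum[OF summ] Om_occ]) (simp add: w0)
  have "(SUP m. P m) \<le> infsum w occupations"
    by (rule cSUP_least) (use Z2 in auto)
  with Z1 have "infsum w occupations = (SUP m. P m)" by simp
  then have "P \<longlonglongrightarrow> infsum w occupations" using lim by simp
  then show ?thesis unfolding fock_gibbs_trace_def P_def q_def w_def .
qed

lemma Q_lim: "((\<lambda>x::real. (1 - exp (- x)) / x) \<longlongrightarrow> 1) (at 0)"
proof -
  have "((\<lambda>x::real. 1 - exp (- x)) has_field_derivative 1) (at 0)"
    by (auto intro!: derivative_eq_intros)
  then have "((\<lambda>y. ((1 - exp (- y)) - (1 - exp (- 0))) / (y - 0)) \<longlongrightarrow> (1::real)) (at 0)"
    by (simp only: has_field_derivative_iff)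
  then show ?thesis by simp
qed

lemma inv_lim: assumes "c > 0" shows "filterlim (\<lambda>\<tau>::real. c / \<tau>) (at 0) at_top"
proof -
  have "((\<lambda>\<tau>::real. c / \<tau>) \<longlongrightarrow> 0) at_top"
    by (rule tendsto_divide_0[OF tendsto_const filterlim_at_top_imp_at_infinity[OF filterlim_ident]])
  moreover have "eventually (\<lambda>\<tau>::real. c / \<tau> \<noteq> 0) at_top"
    using eventually_gt_at_top[of 0] by eventually_elim (use assms in auto)
  ultimately show ?thesis by (simp add: filterlim_at)
qed

lemma f_lim:
  fixes l \<nu> :: real assumes l: "l > 0" and nu: "\<nu> \<ge> 0"
  shows "((\<lambda>\<tau>. (1 - exp (- (l / \<tau>))) / (1 - exp (- ((l + \<nu>) / \<tau>)))) \<longlongrightarrow> l / (l + \<nu>)) at_top"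
proof -
  define Q where "Q x = (1 - exp (- x)) / x" for x :: real
  have Q1: "((\<lambda>\<tau>. Q (c / \<tau>)) \<longlongrightarrow> 1) at_top" if "c > 0" for c
    unfolding Q_def by (rule filterlim_compose[OF Q_lim inv_lim[OF that]])
  have lim: "((\<lambda>\<tau>. Q (l / \<tau>) / Q ((l + \<nu>) / \<tau>) * (l / (l + \<nu>))) \<longlongrightarrow> 1 / 1 * (l / (l + \<nu>))) at_top"
    using l nu by (intro tendsto_intros Q1) auto
  have ev: "eventually (\<lambda>\<tau>. Q (l / \<tau>) / Q ((l + \<nu>) / \<tau>) * (l / (l + \<nu>)) =
      (1 - exp (- (l / \<tau>))) / (1 - exp (- ((l + \<nu>) / \<tau>)))) at_top"
    using eventually_gt_at_top[of 0]
  proof eventually_elim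
    case (elim \<tau>)
    have p: "l / \<tau> > 0" "(l + \<nu>) / \<tau> > 0" using elim l nu by auto
    have B: "1 - exp (- ((l + \<nu>) / \<tau>)) > 0" using p by simp
    have lr: "l / (l + \<nu>) = (l / \<tau>) / ((l + \<nu>) / \<tau>)" using elim by simp
    have gen: "(A / a) / (B / b) * (a / b) = A / B" if "a > 0" "b > 0" "B \<noteq> 0" for A B a b :: real
      using that by (simp add: field_simps)
    show ?case unfolding lr Q_def by (rule gen) (use p B in auto)
  qed
  show ?thesis using Lim_transform_eventually[OF lim ev] by simp
qed

lemma f_bounds:
  fixes a b :: real assumes a: "0 < a" and ab: "a \<le> b"
  shows "a / b \<le> (1 - exp (- a)) / (1 - exp (- b))" and "(1 - exp (- a)) / (1 - exp (- b)) \<le> 1"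
proof -
  have b: "b > 0" using a ab by simp
  define t where "t = a / b"
  have t0: "t \<ge> 0" and t1: "t \<le> 1" using a ab b by (auto simp: t_def)
  have "exp ((1 - t) *\<^sub>R 0 + t *\<^sub>R (- b)) \<le> (1 - t) * exp 0 + t * exp (- b)"
    by (rule convex_onD[OF exp_convex t0 t1]) auto
  moreover have "(1 - t) *\<^sub>R 0 + t *\<^sub>R (- b) = - a" using b by (simp add: t_def)
  ultimately have c: "exp (- a) \<le> (1 - t) + t * exp (- b)" by simp
  have eb: "1 - exp (- b) > 0" using b by simp
  have "a * (1 - exp (- b)) \<le> b * (1 - exp (- a))"
  proof -
    have "b * exp (- a) \<le> b * ((1 - t) + t * exp (- b))" using c b by (simp add: mult_left_mono)
    also have "\<dots> = b - a + a * exp (- b)" using b by (simp add: t_def field_simps)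
    finally show ?thesis by (simp add: algebra_simps)
  qed
  then show "a / b \<le> (1 - exp (- a)) / (1 - exp (- b))"
    using eb b by (simp add: field_simps)
  have "exp (- b) \<le> exp (- a)" using ab by simp
  then show "(1 - exp (- a)) / (1 - exp (- b)) \<le> 1" using eb by simp
qed

lemma prod_diff:
  fixes x y :: "nat \<Rightarrow> real"
  assumes "\<And>k. 0 \<le> x k" "\<And>k. x k \<le> 1" "\<And>k. 0 \<le> y k" "\<And>k. y k \<le> 1"
  shows "\<bar>(\<Prod>k<m. x k) - (\<Prod>k<m. y k)\<bar> \<le> (\<Sum>k<m. \<bar>x k - y k\<bar>)"
proof (induction m)
  case 0
  then show ?case by simp
next
  case (Suc m)
  define X where "X = (\<Prod>k<m. x k)"
  define Y where "Y = (\<Prod>k<m. y k)"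
  have X: "0 \<le> X" "X \<le> 1" unfolding X_def using assms by (auto intro: prod_nonneg prod_le_1)
  have Y: "0 \<le> Y" "Y \<le> 1" unfolding Y_def using assms by (auto intro: prod_nonneg prod_le_1)
  have "\<bar>X * x m - Y * y m\<bar> = \<bar>(x m - y m) * X + y m * (X - Y)\<bar>" by (simp add: algebra_simps)
  also have "\<dots> \<le> \<bar>x m - y m\<bar> * \<bar>X\<bar> + \<bar>y m\<bar> * \<bar>X - Y\<bar>" by (simp add: abs_triangle_ineq[THEN order_trans] abs_mult)
  also have "\<dots> \<le> \<bar>x m - y m\<bar> * 1 + 1 * \<bar>X - Y\<bar>"
    using X assms[of m] by (intro add_mono mult_mono) auto
  finally have "\<bar>X * x m - Y * y m\<bar> \<le> \<bar>x m - y m\<bar> + \<bar>X - Y\<bar>" by simp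
  then show ?case using Suc.IH by (simp add: X_def Y_def)
qed

lemma tannery0:
  fixes h :: "nat \<Rightarrow> real \<Rightarrow> real" and b :: "nat \<Rightarrow> real"
  assumes b: "summable b" and h0: "\<And>k \<tau>. \<tau> > 0 \<Longrightarrow> 0 \<le> h k \<tau>" and hb: "\<And>k \<tau>. \<tau> > 0 \<Longrightarrow> h k \<tau> \<le> b k"
    and hl: "\<And>k. (h k \<longlongrightarrow> 0) at_top"
  shows "((\<lambda>\<tau>. \<Sum>k. h k \<tau>) \<longlongrightarrow> 0) at_top"
proof (rule order_tendstoI)
  fix e :: real assume "e < 0"
  show "eventually (\<lambda>\<tau>. e < (\<Sum>k. h k \<tau>)) at_top"
    using eventually_gt_at_top[of 0]
  proof eventually_elim
    case (elim \<tau>)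
    have "summable (\<lambda>k. h k \<tau>)" using elim h0 hb by (intro summable_comparison_test'[OF b]) auto
    then have "0 \<le> (\<Sum>k. h k \<tau>)" using elim h0 by (intro suminf_nonneg) auto
    then show ?case using \<open>e < 0\<close> by simp
  qed
next
  fix e :: real assume e: "0 < e"
  obtain N where N: "\<And>n. n \<ge> N \<Longrightarrow> norm (\<Sum>i. b (i + n)) < e / 2"
    using suminf_exist_split[of "e/2" b] e b by auto
  have "((\<lambda>\<tau>. \<Sum>k<N. h k \<tau>) \<longlongrightarrow> (\<Sum>k<N. 0)) at_top"
    by (intro tendsto_sum hl)
  then have ev: "eventually (\<lambda>\<tau>. (\<Sum>k<N. h k \<tau>) < e / 2) at_top"
    using order_tendstoD(2)[of "\<lambda>\<tau>. \<Sum>k<N. h k \<tau>" 0 at_top "e/2"] e by simp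
  show "eventually (\<lambda>\<tau>. (\<Sum>k. h k \<tau>) < e) at_top"
    using ev eventually_gt_at_top[of 0]
  proof eventually_elim
    case (elim \<tau>)
    have s: "summable (\<lambda>k. h k \<tau>)" using elim h0 hb by (intro summable_comparison_test'[OF b]) auto
    have "(\<Sum>k. h k \<tau>) = (\<Sum>i. h (i + N) \<tau>) + (\<Sum>k<N. h k \<tau>)"
      by (rule suminf_split_initial_segment[OF s])
    also have "(\<Sum>i. h (i + N) \<tau>) \<le> (\<Sum>i. b (i + N))"
    proof (rule suminf_le)
      show "summable (\<lambda>i. h (i + N) \<tau>)" using summable_iff_shift[of "\<lambda>i. h i \<tau>" N] s by simp
      show "summable (\<lambda>i. b (i + N))" using summable_iff_shift[of b N] b by simp
    qed (use elim hb in auto)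
    also have "(\<Sum>i. b (i + N)) < e / 2" using N[of N] by simp
    finally show ?case using elim by simp
  qed
qed

theorem lemma3p4:
  fixes lam :: "nat \<Rightarrow> real" and \<nu> :: real
  assumes lam_pos: "\<And>k. lam k > 0"
    and trace_class: "summable (\<lambda>k. 1 / lam k)"
    and nu_pos: "\<nu> > 0"
  shows "((\<lambda>\<tau>. fock_gibbs_trace lam \<nu> \<tau> / fock_gibbs_trace lam 0 \<tau>)
           \<longlongrightarrow> (\<integral>\<omega>. exp (- \<nu> * classical_mass lam \<omega>) \<partial>gauss_mu)) at_top"
proof -
  define f where "f k \<tau> = (1 - exp (- (lam k / \<tau>))) / (1 - exp (- ((lam k + \<nu>) / \<tau>)))" for k \<tau>
  define g where "g k = lam k / (lam k + \<nu>)" for k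
  define I where "I = (\<integral>\<omega>. exp (- \<nu> * classical_mass lam \<omega>) \<partial>gauss_mu)"
  define R where "R \<tau> = fock_gibbs_trace lam \<nu> \<tau> / fock_gibbs_trace lam 0 \<tau>" for \<tau>
  have gI: "(\<lambda>m. \<Prod>k<m. g k) \<longlonglongrightarrow> I"
    using rhs_limit[OF lam_pos trace_class, of \<nu>] nu_pos unfolding g_def I_def by simp
  have fb: "g k \<le> f k \<tau> \<and> f k \<tau> \<le> 1" if tau: "\<tau> > 0" for k \<tau>
  proof -
    have a: "0 < lam k / \<tau>" and ab: "lam k / \<tau> \<le> (lam k + \<nu>) / \<tau>"
      using lam_pos[of k] nu_pos tau by (auto simp: divide_right_mono)
    have "g k = (lam k / \<tau>) / ((lam k + \<nu>) / \<tau>)" using tau by (simp add: g_def)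
    then show ?thesis using f_bounds[OF a ab] unfolding f_def by simp
  qed
  have g01: "0 \<le> g k" "g k \<le> 1" for k using lam_pos[of k] nu_pos by (auto simp: g_def)
  have fR: "(\<lambda>m. \<Prod>k<m. f k \<tau>) \<longlonglongrightarrow> R \<tau>" if tau: "\<tau> > 0" for \<tau>
  proof -
    have L0: "(\<lambda>m. \<Prod>k<m. 1 / (1 - exp (- ((lam k + 0) / \<tau>)))) \<longlonglongrightarrow> fock_gibbs_trace lam 0 \<tau>"
      by (rule fock_limit[OF lam_pos trace_class _ tau]) simp
    have Ln: "(\<lambda>m. \<Prod>k<m. 1 / (1 - exp (- ((lam k + \<nu>) / \<tau>)))) \<longlonglongrightarrow> fock_gibbs_trace lam \<nu> \<tau>"
      by (rule fock_limit[OF lam_pos trace_class _ tau]) (use nu_pos in simp)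
    have e0: "exp (- ((lam k + 0) / \<tau>)) < 1" for k using lam_pos[of k] tau by simp
    have en: "exp (- ((lam k + \<nu>) / \<tau>)) < 1" for k using lam_pos[of k] nu_pos tau by simp
    have "1 \<le> fock_gibbs_trace lam 0 \<tau>"
    proof (rule LIMSEQ_le_const[OF L0], intro exI allI impI)
      fix m :: nat
      show "1 \<le> (\<Prod>k<m. 1 / (1 - exp (- ((lam k + 0) / \<tau>))))"
      proof (rule prod_ge_1)
        fix k
        show "1 \<le> 1 / (1 - exp (- ((lam k + 0) / \<tau>)))" using e0[of k] by (simp add: field_simps)
      qed
    qed
    then have "((\<lambda>m. (\<Prod>k<m. 1 / (1 - exp (- ((lam k + \<nu>) / \<tau>)))) / (\<Prod>k<m. 1 / (1 - exp (- ((lam k + 0) / \<tau>)))))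
        \<longlonglongrightarrow> R \<tau>)"
      unfolding R_def by (intro tendsto_divide Ln L0) auto
    moreover have "(\<Prod>k<m. 1 / (1 - exp (- ((lam k + \<nu>) / \<tau>)))) / (\<Prod>k<m. 1 / (1 - exp (- ((lam k + 0) / \<tau>))))
        = (\<Prod>k<m. f k \<tau>)" for m
    proof -
      have "(\<Prod>k<m. 1 / (1 - exp (- ((lam k + \<nu>) / \<tau>)))) / (\<Prod>k<m. 1 / (1 - exp (- ((lam k + 0) / \<tau>))))
          = (\<Prod>k<m. (1 / (1 - exp (- ((lam k + \<nu>) / \<tau>)))) / (1 / (1 - exp (- ((lam k + 0) / \<tau>)))))"
        by (rule prod_dividef[symmetric])
      also have "\<dots> = (\<Prod>k<m. f k \<tau>)"
      proof (rule prod.cong[OF refl])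
        fix k
        show "(1 / (1 - exp (- ((lam k + \<nu>) / \<tau>)))) / (1 / (1 - exp (- ((lam k + 0) / \<tau>)))) = f k \<tau>"
          using e0[of k] en[of k] unfolding f_def by (simp add: field_simps)
      qed
      finally show ?thesis .
    qed
    ultimately show ?thesis by simp
  qed
  define S where "S \<tau> = (\<Sum>k. f k \<tau> - g k)" for \<tau>
  have bnd: "f k \<tau> - g k \<le> \<nu> / lam k" if tau: "\<tau> > 0" for k \<tau>
  proof -
    have "f k \<tau> - g k \<le> 1 - g k" using fb[OF tau, of k] by simp
    also have "1 - g k = \<nu> / (lam k + \<nu>)" using lam_pos[of k] nu_pos by (simp add: g_def field_simps)
    also have "\<dots> \<le> \<nu> / lam k" using lam_pos[of k] nu_pos by (intro divide_left_mono) auto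
    finally show ?thesis .
  qed
  have bs: "summable (\<lambda>k. \<nu> / lam k)" using summable_mult[OF trace_class, of \<nu>] by simp
  have Ssum: "summable (\<lambda>k. f k \<tau> - g k)" if tau: "\<tau> > 0" for \<tau>
    by (rule summable_comparison_test'[OF bs]) (use fb[OF tau] bnd[OF tau] in auto)
  have RS: "norm (R \<tau> - I) \<le> S \<tau>" if tau: "\<tau> > 0" for \<tau>
  proof -
    have "(\<lambda>m. \<bar>(\<Prod>k<m. f k \<tau>) - (\<Prod>k<m. g k)\<bar>) \<longlonglongrightarrow> \<bar>R \<tau> - I\<bar>"
      by (intro tendsto_intros fR[OF tau] gI)
    moreover have "\<bar>(\<Prod>k<m. f k \<tau>) - (\<Prod>k<m. g k)\<bar> \<le> S \<tau>" for m
    proof -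
      have "\<bar>(\<Prod>k<m. f k \<tau>) - (\<Prod>k<m. g k)\<bar> \<le> (\<Sum>k<m. \<bar>f k \<tau> - g k\<bar>)"
        by (rule prod_diff) (use fb[OF tau] g01 in \<open>auto intro: order_trans\<close>)
      also have "\<dots> = (\<Sum>k<m. f k \<tau> - g k)" using fb[OF tau] by simp
      also have "\<dots> \<le> S \<tau>" unfolding S_def
        by (rule sum_le_suminf[OF Ssum[OF tau]]) (use fb[OF tau] in auto)
      finally show ?thesis .
    qed
    ultimately have "\<bar>R \<tau> - I\<bar> \<le> S \<tau>" by (intro LIMSEQ_le_const2) auto
    then show ?thesis by simp
  qed
  have S0: "(S \<longlongrightarrow> 0) at_top"
    unfolding S_def
  proof (rule tannery0[OF bs])
    show "0 \<le> f k \<tau> - g k" if "\<tau> > 0" for k \<tau> using fb[OF that, of k] by simp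
    show "f k \<tau> - g k \<le> \<nu> / lam k" if "\<tau> > 0" for k \<tau> by (rule bnd[OF that])
    show "((\<lambda>\<tau>. f k \<tau> - g k) \<longlongrightarrow> 0) at_top" for k
    proof -
      have "(f k \<longlongrightarrow> g k) at_top"
        unfolding f_def g_def by (rule f_lim) (use lam_pos nu_pos in auto)
      then have "((\<lambda>\<tau>. f k \<tau> - g k) \<longlongrightarrow> g k - g k) at_top" by (intro tendsto_intros)
      then show ?thesis by simp
    qed
  qed
  have "((\<lambda>\<tau>. R \<tau> - I) \<longlongrightarrow> 0) at_top"
  proof (rule Lim_null_comparison[OF _ S0])
    show "eventually (\<lambda>\<tau>. norm (R \<tau> - I) \<le> S \<tau>) at_top"
      using eventually_gt_at_top[of "0::real"] by (rule eventually_mono) (rule RS)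
  qed
  then have "(R \<longlongrightarrow> I) at_top" by (rule LIM_zero_cancel)
  then show ?thesis unfolding R_def I_def .
qed

end
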